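(* Let $K$ be an algebraically closed field, complete with respect to a non-trivial non-archimedean absolute value $|\cdot|_v$, with $\mathrm{char}(K)=0$ or $\mathrm{char}(K)>d$, and let $f\in\mathrm{Poly}_{N,d}(K)$. Then: (1) for every $D\in\mathrm{Div}^*_K(\mathbb{P}^N)$ the limit $G_{f,v}(D)=\lim_{n\to\infty}d^{-n}\lambda_v(f^n_*(D))$ exists; (2) $G_{f,v}(f_*(D))=dG_{f,v}(D)$ for all $D\in\mathrm{Div}^*_K(\mathbb{P}^N)$; (3) if $D\in\mathrm{Div}^*_K(\mathbb{P}^N)$ is preperiodic for $f$, then $G_{f,v}(D)=0$; (4) if $\lambda_v(D)>\mathcal{B}_v(f)$, then $G_{f,v}(D)=\lambda_v(D)$; (5) for every $D\in\mathrm{Div}^*_K(\mathbb{P}^N)$, $|G_{f,v}(D)-\lambda_v(D)|\le 2\mathcal{B}_v(f)$.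
   Context: $N\ge1$, $d\ge2$. $\mathrm{Ind}^*(N,d)$: multi-indices $I=(I_0,\dots,I_N)$ with $\sum I_j=d$, $0<I_N<d$. $\mathrm{Poly}_{N,d}(K)$: tuples $(a_{i,I})_{0\le i<N,I\in\mathrm{Ind}^*(N,d)}$ in $K$, giving $f=[f_0:\cdots:f_N]$ with $f_i=x_i^d+\sum_Ia_{i,I}\mathbf{x}^I$ ($i<N$), $f_N=x_N^d$; $\mathcal{B}_v(f)=\log^+\max|a_{i,I}|_v^{1/I_N}$. $\mathrm{Div}^*_K(\mathbb{P}^N)$: effective divisors over $K$ defined by a form $F_D$ with $F_D(x_0,\dots,x_{N-1},0)=\prod_{i<N}x_i^{e_i}$; $\lambda_v(D)=\log^+\sup_{|\beta_0|_v=\cdots=|\beta_{N-1}|_v=1}\max\{|\beta_N|_v^{-1}:F_D(\beta)=0\}$. $f_*(D)$: push-forward divisor, defined by the Macaulay-resultant form $\mathrm{Res}(F_D,f)$, $\mathrm{Res}(F,f)(y_0,\dots,y_{N-1},1)=\mathrm{Res}_{x}(F,y_0x_N^d-f_0,\dots,y_{N-1}x_N^d-f_{N-1})$; its points are the images of points of $D$; $f(D)$ denotes its radical (reduced divisor with the same support). $D$ is preperiodic for $f$ if the sequence $f^n(D)$, $n\ge0$, takes only finitely many values. *)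

theory Defs
  imports Complex_Main "HOL-Computational_Algebra.Polynomial"
begin

definition logplus :: "real \<Rightarrow> real" where
  "logplus x = (if x \<le> 1 then 0 else ln x)"

definition nonarch_abs :: "('k::field \<Rightarrow> real) \<Rightarrow> bool" where
  "nonarch_abs av \<longleftrightarrow>
     (\<forall>x. 0 \<le> av x) \<and> (\<forall>x. av x = 0 \<longleftrightarrow> x = 0) \<and>
     (\<forall>x y. av (x * y) = av x * av y) \<and>
     (\<forall>x y. av (x + y) \<le> max (av x) (av y))"

definition nontrivial_abs :: "('k::field \<Rightarrow> real) \<Rightarrow> bool" where
  "nontrivial_abs av \<longleftrightarrow> (\<exists>x. x \<noteq> 0 \<and> av x \<noteq> 1)"

definition complete_abs :: "('k::field \<Rightarrow> real) \<Rightarrow> bool" where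
  "complete_abs av \<longleftrightarrow>
     (\<forall>X::nat \<Rightarrow> 'k. (\<forall>e>0. \<exists>M. \<forall>m\<ge>M. \<forall>n\<ge>M. av (X m - X n) < e) \<longrightarrow>
        (\<exists>L. (\<lambda>n. av (X n - L)) \<longlonglongrightarrow> 0))"

definition alg_closed :: "'k::field itself \<Rightarrow> bool" where
  "alg_closed _ \<longleftrightarrow> (\<forall>p :: 'k poly. 0 < degree p \<longrightarrow> (\<exists>x. poly p x = 0))"

text \<open>Points of K^{N+1} are functions nat => K with coordinates > N equal to 0.
  Multi-indices are functions nat => nat vanishing beyond N.\<close>

definition mindices :: "nat \<Rightarrow> nat \<Rightarrow> (nat \<Rightarrow> nat) set" where
  "mindices N e = {I. (\<forall>j>N. I j = 0) \<and> sum I {..N} = e}"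

definition Ind_star :: "nat \<Rightarrow> nat \<Rightarrow> (nat \<Rightarrow> nat) set" where
  "Ind_star N d = {I \<in> mindices N d. 0 < I N \<and> I N < d}"

definition mono :: "nat \<Rightarrow> (nat \<Rightarrow> nat) \<Rightarrow> (nat \<Rightarrow> 'k::field) \<Rightarrow> 'k" where
  "mono N I x = (\<Prod>j\<le>N. x j ^ I j)"

definition is_form :: "nat \<Rightarrow> nat \<Rightarrow> ((nat \<Rightarrow> nat) \<Rightarrow> 'k::field) \<Rightarrow> bool" where
  "is_form N e c \<longleftrightarrow> (\<forall>I. c I \<noteq> 0 \<longrightarrow> I \<in> mindices N e)"

definition eval_form :: "nat \<Rightarrow> nat \<Rightarrow> ((nat \<Rightarrow> nat) \<Rightarrow> 'k::field) \<Rightarrow> (nat \<Rightarrow> 'k) \<Rightarrow> 'k" where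
  "eval_form N e c x = (\<Sum>I\<in>mindices N e. c I * mono N I x)"

text \<open>Div^*_K(P^N): effective divisors defined by a form F_D of degree e with
  F_D(x_0,...,x_{N-1},0) = prod_{i<N} x_i^{e_i}.\<close>
definition Div_star_form :: "nat \<Rightarrow> nat \<Rightarrow> ((nat \<Rightarrow> nat) \<Rightarrow> 'k::field) \<Rightarrow> bool" where
  "Div_star_form N e c \<longleftrightarrow> is_form N e c \<and>
     (\<exists>E. (\<forall>j\<ge>N. E j = 0) \<and> sum E {..<N} = e \<and>
          (\<forall>I. I N = 0 \<longrightarrow> c I = (if I = E then 1 else 0)))"

text \<open>Nonzero points of K^{N+1} (representatives of points of P^N).\<close>
definition pts :: "nat \<Rightarrow> (nat \<Rightarrow> 'k::field) set" where
  "pts N = {x. (\<forall>j>N. x j = 0) \<and> (\<exists>j\<le>N. x j \<noteq> 0)}"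

text \<open>The support of the divisor D (as a cone of representatives).\<close>
definition zero_set :: "nat \<Rightarrow> nat \<Rightarrow> ((nat \<Rightarrow> nat) \<Rightarrow> 'k::field) \<Rightarrow> (nat \<Rightarrow> 'k) set" where
  "zero_set N e c = {x \<in> pts N. eval_form N e c x = 0}"

definition polymap :: "nat \<Rightarrow> nat \<Rightarrow> (nat \<Rightarrow> (nat \<Rightarrow> nat) \<Rightarrow> 'k::field) \<Rightarrow> (nat \<Rightarrow> 'k) \<Rightarrow> (nat \<Rightarrow> 'k)" where
  "polymap N d a x = (\<lambda>i. if i < N then x i ^ d + (\<Sum>I\<in>Ind_star N d. a i I * mono N I x)
                          else if i = N then x N ^ d else 0)"

definition B_v :: "nat \<Rightarrow> nat \<Rightarrow> ('k::field \<Rightarrow> real) \<Rightarrow> (nat \<Rightarrow> (nat \<Rightarrow> nat) \<Rightarrow> 'k) \<Rightarrow> real" where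
  "B_v N d av a = logplus (Max {av (a i I) powr (1 / real (I N)) | i I. i < N \<and> I \<in> Ind_star N d})"

text \<open>Support of the push-forward (f^n)_*(D): the (cone over the) image of the support of D
  under f^n.  Its points are exactly the images of the points of D.\<close>
definition push_set :: "nat \<Rightarrow> nat \<Rightarrow> (nat \<Rightarrow> (nat \<Rightarrow> nat) \<Rightarrow> 'k::field) \<Rightarrow> nat \<Rightarrow> (nat \<Rightarrow> 'k) set \<Rightarrow> (nat \<Rightarrow> 'k) set" where
  "push_set N d a n Z = {y. \<exists>x\<in>Z. \<exists>t. t \<noteq> 0 \<and> y = (\<lambda>j. t * ((polymap N d a ^^ n) x) j)}"

text \<open>lambda_v of a divisor, which depends only on its support Z:
  log^+ sup_{|b_0|=...=|b_{N-1}|=1} max {|b_N|^{-1} : b in Z}.\<close>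
definition lambda_v :: "nat \<Rightarrow> ('k::field \<Rightarrow> real) \<Rightarrow> (nat \<Rightarrow> 'k) set \<Rightarrow> real" where
  "lambda_v N av Z = logplus (Sup ({0} \<union> {inverse (av (b N)) | b. b \<in> Z \<and> (\<forall>i<N. av (b i) = 1)}))"

definition G_seq :: "nat \<Rightarrow> nat \<Rightarrow> ('k::field \<Rightarrow> real) \<Rightarrow> (nat \<Rightarrow> (nat \<Rightarrow> nat) \<Rightarrow> 'k) \<Rightarrow> (nat \<Rightarrow> 'k) set \<Rightarrow> nat \<Rightarrow> real" where
  "G_seq N d av a Z n = lambda_v N av (push_set N d a n Z) / real d ^ n"

definition G_v :: "nat \<Rightarrow> nat \<Rightarrow> ('k::field \<Rightarrow> real) \<Rightarrow> (nat \<Rightarrow> (nat \<Rightarrow> nat) \<Rightarrow> 'k) \<Rightarrow> (nat \<Rightarrow> 'k) set \<Rightarrow> real" where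
  "G_v N d av a Z = lim (G_seq N d av a Z)"

text \<open>D is preperiodic: the reduced divisors f^n(D) take only finitely many values,
  i.e. their supports take finitely many values.\<close>
definition preperiodic :: "nat \<Rightarrow> nat \<Rightarrow> (nat \<Rightarrow> (nat \<Rightarrow> nat) \<Rightarrow> 'k::field) \<Rightarrow> (nat \<Rightarrow> 'k) set \<Rightarrow> bool" where
  "preperiodic N d a Z \<longleftrightarrow> finite (range (\<lambda>n. push_set N d a n Z))"

end

theory Submission
  imports Defs
begin



context
  fixes av :: "'k::field \<Rightarrow> real"
  assumes na: "nonarch_abs av"
begin

lemma av_nonneg: "0 \<le> av x" using na unfolding nonarch_abs_def by blast
lemma av_zero_iff: "av x = 0 \<longleftrightarrow> x = 0" using na unfolding nonarch_abs_def by blast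
lemma av_mult: "av (x * y) = av x * av y" using na unfolding nonarch_abs_def by blast
lemma av_ultra: "av (x + y) \<le> max (av x) (av y)" using na unfolding nonarch_abs_def by blast

lemma av_0: "av 0 = 0" using av_zero_iff by simp

lemma av_one: "av 1 = 1"
proof -
  have "av 1 = av 1 * av 1" using av_mult[of 1 1] by simp
  moreover have "av 1 \<noteq> 0" using av_zero_iff by simp
  ultimately show ?thesis by (metis mult_cancel_right1)
qed

lemma av_power: "av (x ^ n) = av x ^ n"
  by (induction n) (auto simp: av_one av_mult)

lemma av_minus: "av (- x) = av x"
proof -
  have "av (-1) * av (-1) = 1" using av_mult[of "-1" "-1"] av_one by simp
  hence "(av (-1) - 1) * (av (-1) + 1) = 0" by (simp add: algebra_simps)
  hence "av (-1) = 1" using av_nonneg[of "-1"] by auto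
  thus ?thesis using av_mult[of "-1" x] by simp
qed

lemma av_prod: "av (prod g A) = (\<Prod>i\<in>A. av (g i))"
  by (induction A rule: infinite_finite_induct) (auto simp: av_one av_mult)

lemma av_sum_le: "(\<And>i. i \<in> A \<Longrightarrow> av (g i) \<le> R) \<Longrightarrow> 0 \<le> R \<Longrightarrow> av (sum g A) \<le> R"
proof (induction A rule: infinite_finite_induct)
  case (insert x F)
  have "av (g x) \<le> R" "av (sum g F) \<le> R" using insert by auto
  then show ?case using av_ultra[of "g x" "sum g F"] insert(1,2) by simp
qed (auto simp: av_0)

lemma av_sum_less: "(\<And>i. i \<in> A \<Longrightarrow> av (g i) < R) \<Longrightarrow> 0 < R \<Longrightarrow> av (sum g A) < R"
proof (induction A rule: infinite_finite_induct)
  case (insert x F)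
  have "av (g x) < R" "av (sum g F) < R" using insert by auto
  then show ?case using av_ultra[of "g x" "sum g F"] insert(1,2) by simp
qed (auto simp: av_0)

lemma av_add_eq: assumes "av v < av u" shows "av (u + v) = av u"
proof -
  have 1: "av (u + v) \<le> av u" using av_ultra[of u v] assms by auto
  have "av u = av ((u + v) + (- v))" by simp
  also have "\<dots> \<le> max (av (u+v)) (av v)" using av_ultra[of "u+v" "-v"] av_minus by simp
  finally have "av u \<le> av (u+v)" using assms by auto
  with 1 show ?thesis by simp
qed

lemma av_add_less: "av u < R \<Longrightarrow> av v < R \<Longrightarrow> av (u + v) < R"
  using av_ultra[of u v] by auto

lemma av_add_le: "av u \<le> R \<Longrightarrow> av v \<le> R \<Longrightarrow> av (u + v) \<le> R"
  using av_ultra[of u v] by auto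

end

lemma finite_mindices: "finite (mindices N e)"
proof -
  have "mindices N e \<subseteq> {f. \<forall>x. (x \<in> {..N} \<longrightarrow> f x \<in> {..e}) \<and> (x \<notin> {..N} \<longrightarrow> f x = 0)}"
  proof
    fix I assume I: "I \<in> mindices N e"
    hence s: "sum I {..N} = e" and z: "\<forall>j>N. I j = 0" by (auto simp: mindices_def)
    have "\<And>x. x \<le> N \<Longrightarrow> I x \<le> e" using s member_le_sum[of _ "{..N}" I] by fastforce
    thus "I \<in> {f. \<forall>x. (x \<in> {..N} \<longrightarrow> f x \<in> {..e}) \<and> (x \<notin> {..N} \<longrightarrow> f x = 0)}"
      using z by auto
  qed
  moreover have "finite {f. \<forall>x. (x \<in> {..N} \<longrightarrow> f x \<in> {..e}) \<and> (x \<notin> {..N} \<longrightarrow> f x = (0::nat))}"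
    by (rule finite_set_of_finite_funs) auto
  ultimately show ?thesis by (rule finite_subset)
qed

lemma finite_Ind_star: "finite (Ind_star N d)"
  using finite_mindices[of N d] unfolding Ind_star_def by (rule rev_finite_subset) auto

lemma mono_hom: "I \<in> mindices N e \<Longrightarrow> mono N I (\<lambda>j. t * x j) = t ^ e * mono N I x"
  unfolding mono_def mindices_def
  by (auto simp: power_mult_distrib prod.distrib power_sum)

lemma polymap_hom: "polymap N d a (\<lambda>j. t * x j) = (\<lambda>j. t ^ d * polymap N d a x j)"
proof
  fix i
  have "\<And>I. I \<in> Ind_star N d \<Longrightarrow> mono N I (\<lambda>j. t * x j) = t ^ d * mono N I x"
    using mono_hom unfolding Ind_star_def by blast
  thus "polymap N d a (\<lambda>j. t * x j) i = t ^ d * polymap N d a x i"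
    unfolding polymap_def
    by (auto simp: power_mult_distrib sum_distrib_left algebra_simps intro!: sum.cong)
qed

lemma funpow_hom: "(polymap N d a ^^ n) (\<lambda>j. t * x j) = (\<lambda>j. t ^ (d ^ n) * (polymap N d a ^^ n) x j)"
proof (induction n)
  case (Suc n)
  have e: "(t ^ (d ^ n)) ^ d = t ^ (d ^ Suc n)"
    by (simp add: power_mult[symmetric] mult.commute)
  have "(polymap N d a ^^ Suc n) (\<lambda>j. t * x j) = polymap N d a ((polymap N d a ^^ n) (\<lambda>j. t * x j))"
    by simp
  also have "\<dots> = (\<lambda>j. (t ^ (d ^ n)) ^ d * polymap N d a ((polymap N d a ^^ n) x) j)"
    unfolding Suc polymap_hom ..
  finally show ?case unfolding e by simp
qed simp

lemma push_setI: "x \<in> Z \<Longrightarrow> t \<noteq> 0 \<Longrightarrow> y = (\<lambda>j. t * (polymap N d a ^^ n) x j) \<Longrightarrow> y \<in> push_set N d a n Z"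
  unfolding push_set_def by blast

lemma push_setE: assumes "y \<in> push_set N d a n Z"
  obtains x t where "x \<in> Z" "t \<noteq> 0" "y = (\<lambda>j. t * (polymap N d a ^^ n) x j)"
  using assms unfolding push_set_def by blast

lemma push_push: "push_set N d a m (push_set N d a n Z) = push_set N d a (m + n) Z"
proof (intro set_eqI iffI)
  fix y assume "y \<in> push_set N d a m (push_set N d a n Z)"
  then obtain z s where z: "z \<in> push_set N d a n Z" "s \<noteq> 0" and y: "y = (\<lambda>j. s * (polymap N d a ^^ m) z j)"
    by (rule push_setE)
  from z(1) obtain x t where x: "x \<in> Z" "t \<noteq> 0" and zz: "z = (\<lambda>j. t * (polymap N d a ^^ n) x j)"
    by (rule push_setE)
  have "(polymap N d a ^^ m) z = (\<lambda>j. t ^ (d ^ m) * (polymap N d a ^^ m) ((polymap N d a ^^ n) x) j)"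
    unfolding zz by (rule funpow_hom)
  hence "y = (\<lambda>j. (s * t ^ (d ^ m)) * (polymap N d a ^^ (m + n)) x j)"
    unfolding y funpow_add comp_def by (simp add: mult.assoc)
  moreover have "s * t ^ (d ^ m) \<noteq> 0" using x z by simp
  ultimately show "y \<in> push_set N d a (m + n) Z" using x by (intro push_setI)
next
  fix y assume "y \<in> push_set N d a (m + n) Z"
  then obtain x t where x: "x \<in> Z" "t \<noteq> 0"
    and y: "y = (\<lambda>j. t * (polymap N d a ^^ (m + n)) x j)"
    by (rule push_setE)
  have 1: "(\<lambda>j. 1 * (polymap N d a ^^ n) x j) \<in> push_set N d a n Z"
    by (rule push_setI[where t=1]) (use x in auto)
  have "y = (\<lambda>j. t * (polymap N d a ^^ m) (\<lambda>j. 1 * (polymap N d a ^^ n) x j) j)"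
    unfolding y funpow_add comp_def by simp
  thus "y \<in> push_set N d a m (push_set N d a n Z)" by (rule push_setI[OF 1 x(2)])
qed

definition cone :: "(nat \<Rightarrow> 'k::field) set \<Rightarrow> bool" where
  "cone Z \<longleftrightarrow> (\<forall>x\<in>Z. \<forall>t. t \<noteq> 0 \<longrightarrow> (\<lambda>j. t * x j) \<in> Z)"

lemma push0: assumes "cone Z" shows "push_set N d a 0 Z = Z"
proof (intro set_eqI iffI)
  fix x assume "x \<in> push_set N d a 0 Z" thus "x \<in> Z" using assms unfolding push_set_def cone_def by auto
next
  fix x assume "x \<in> Z"
  moreover have "x = (\<lambda>j. 1 * (polymap N d a ^^ 0) x j)" by simp
  ultimately show "x \<in> push_set N d a 0 Z" by (intro push_setI[of x Z 1]) auto
qed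

lemma cone_push: "cone (push_set N d a n Z)"
  unfolding cone_def
proof (intro ballI allI impI)
  fix y s assume yy: "y \<in> push_set N d a n Z" and "s \<noteq> (0::'a)"
  from yy obtain x t where x: "x \<in> Z" "t \<noteq> 0" and y: "y = (\<lambda>j. t * (polymap N d a ^^ n) x j)"
    by (rule push_setE)
  have "(\<lambda>j. s * y j) = (\<lambda>j. (s * t) * (polymap N d a ^^ n) x j)" unfolding y by (simp add: mult.assoc)
  moreover have "s * t \<noteq> 0" using x \<open>s \<noteq> 0\<close> by simp
  ultimately show "(\<lambda>j. s * y j) \<in> push_set N d a n Z" using x by (intro push_setI)
qed

lemma cone_zero_set: "cone (zero_set N e c)"
  unfolding cone_def zero_set_def pts_def
proof (safe)
  fix x t assume "eval_form N e c x = 0" "t \<noteq> (0::'a)"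
  thus "eval_form N e c (\<lambda>j. t * x j) = 0"
  proof -
    have "(\<Sum>I\<in>mindices N e. c I * mono N I (\<lambda>j. t * x j)) = t ^ e * (\<Sum>I\<in>mindices N e. c I * mono N I x)"
      by (simp add: mono_hom sum_distrib_left algebra_simps)
    thus ?thesis using \<open>eval_form N e c x = 0\<close> unfolding eval_form_def by simp
  qed
qed auto




definition Sset :: "nat \<Rightarrow> ('k::field \<Rightarrow> real) \<Rightarrow> (nat \<Rightarrow> 'k) set \<Rightarrow> real set" where
  "Sset N av Z = {inverse (av (b N)) | b. b \<in> Z \<and> (\<forall>i<N. av (b i) = 1)}"

lemma SsetI: "b \<in> Z \<Longrightarrow> (\<forall>i<N. av (b i) = 1) \<Longrightarrow> inverse (av (b N)) \<in> Sset N av Z"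
  unfolding Sset_def by blast

lemma lambda_v_Sset: "lambda_v N av Z = logplus (Sup ({0} \<union> Sset N av Z))"
  unfolding lambda_v_def Sset_def ..

lemma polymap_lt: "i < N \<Longrightarrow> polymap N d a x i = x i ^ d + (\<Sum>I\<in>Ind_star N d. a i I * mono N I x)"
  unfolding polymap_def by simp

lemma polymap_N: "polymap N d a x N = x N ^ d"
  unfolding polymap_def by simp

lemma pow_less_one: "0 \<le> (x::real) \<Longrightarrow> x < 1 \<Longrightarrow> 0 < n \<Longrightarrow> x ^ n < 1"
  using power_strict_mono[of x 1 n] by simp

context
  fixes av :: "'k::field \<Rightarrow> real"
  assumes na: "nonarch_abs av"
begin

lemma av_mono: "av (mono N I x) = (\<Prod>j\<le>N. av (x j) ^ I j)"
  unfolding mono_def using na by (simp add: av_prod av_power)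

lemma av_mono_split: "av (mono N I x) = (\<Prod>j<N. av (x j) ^ I j) * av (x N) ^ I N"
  unfolding av_mono lessThan_Suc_atMost[symmetric] by simp

lemma av_mono_le: assumes "\<forall>j\<le>N. av (x j) \<le> 1" shows "av (mono N I x) \<le> av (x N) ^ I N"
proof -
  have "(\<Prod>j<N. av (x j) ^ I j) \<le> 1"
    using assms by (intro prod_le_1) (auto simp: av_nonneg[OF na] power_le_one)
  moreover have "0 \<le> av (x N) ^ I N" using av_nonneg[OF na] by simp
  moreover have "0 \<le> (\<Prod>j<N. av (x j) ^ I j)" using av_nonneg[OF na] by (simp add: prod_nonneg)
  ultimately show ?thesis unfolding av_mono_split by (simp add: mult_left_le_one_le)
qed

lemma av_mono_eq: assumes "\<forall>j<N. av (x j) = 1" shows "av (mono N I x) = av (x N) ^ I N"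
  unfolding av_mono_split using assms by simp

context
  fixes N d :: nat and a :: "nat \<Rightarrow> (nat \<Rightarrow> nat) \<Rightarrow> 'k" and E :: real
  assumes HA: "\<forall>i<N. \<forall>I\<in>Ind_star N d. av (a i I) \<le> E ^ I N"
    and E1: "1 \<le> E"
begin

lemma pert_term: assumes "\<forall>j\<le>N. av (x j) \<le> 1" "i < N" "I \<in> Ind_star N d"
  shows "av (a i I * mono N I x) \<le> (E * av (x N)) ^ I N"
proof -
  have "av (a i I * mono N I x) = av (a i I) * av (mono N I x)" using na by (simp add: av_mult)
  also have "\<dots> \<le> E ^ I N * av (x N) ^ I N"
    using HA assms av_mono_le[OF assms(1)] av_nonneg[OF na] E1 by (intro mult_mono) auto
  finally show ?thesis by (simp add: power_mult_distrib)
qed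

lemma pert_less: assumes "\<forall>j\<le>N. av (x j) \<le> 1" "i < N" "E * av (x N) < 1"
  shows "av (\<Sum>I\<in>Ind_star N d. a i I * mono N I x) < 1"
proof (rule av_sum_less[OF na])
  fix I assume I: "I \<in> Ind_star N d"
  hence "0 < I N" unfolding Ind_star_def by simp
  moreover have "0 \<le> E * av (x N)" using E1 av_nonneg[OF na] by simp
  ultimately have "(E * av (x N)) ^ I N < 1" using assms(3) by (intro pow_less_one)
  thus "av (a i I * mono N I x) < 1" using pert_term[OF assms(1,2) I] by linarith
qed simp

lemma pert_le: assumes "\<forall>j\<le>N. av (x j) \<le> 1" "i < N" "1 \<le> E * av (x N)"
  shows "av (\<Sum>I\<in>Ind_star N d. a i I * mono N I x) \<le> (E * av (x N)) ^ d"
proof (rule av_sum_le[OF na])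
  fix I assume I: "I \<in> Ind_star N d"
  hence "I N \<le> d" unfolding Ind_star_def by simp
  hence "(E * av (x N)) ^ I N \<le> (E * av (x N)) ^ d" using assms(3) by (intro power_increasing)
  thus "av (a i I * mono N I x) \<le> (E * av (x N)) ^ d" using pert_term[OF assms(1,2) I] by linarith
next
  show "0 \<le> (E * av (x N)) ^ d" using assms(3) by simp
qed

end
end




context
  fixes av :: "'k::field \<Rightarrow> real"
  assumes na: "nonarch_abs av"
  fixes N d :: nat and a :: "nat \<Rightarrow> (nat \<Rightarrow> nat) \<Rightarrow> 'k" and E :: real
  assumes HA: "\<forall>i<N. \<forall>I\<in>Ind_star N d. av (a i I) \<le> E ^ I N"
    and E1: "1 \<le> E"
    and N1: "1 \<le> N" and d1: "1 \<le> d"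
begin

lemma UB_norm:
  assumes x: "x \<in> Z" and le1: "\<forall>j\<le>N. av (x j) \<le> 1" and k: "k \<le> N" "av (x k) = 1"
    and unit: "\<forall>i<N. av (t * polymap N d a x i) = 1"
    and SR: "\<forall>s\<in>Sset N av Z. s \<le> R" and R0: "0 \<le> R"
  shows "inverse (av (t * polymap N d a x N)) \<le> max (R ^ d) (E ^ d)"
proof -
  define r where "r = av (x N)"
  have r0: "0 \<le> r" unfolding r_def using av_nonneg[OF na] .
  have avN: "av (t * polymap N d a x N) = av t * r ^ d"
    unfolding polymap_N r_def using na by (simp add: av_mult av_power)
  have t0: "0 \<le> av t" using av_nonneg[OF na] .
  have ut: "\<And>i. i < N \<Longrightarrow> av t * av (polymap N d a x i) = 1"
    using unit na by (simp add: av_mult)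
  show ?thesis
  proof (cases "1 \<le> E * r")
    case True
    have rpos: "0 < r" using True r0 by (cases "r = 0") auto
    have "av (x 0 ^ d) \<le> (E * r) ^ d"
    proof -
      have "av (x 0 ^ d) = av (x 0) ^ d" using na by (simp add: av_power)
      also have "\<dots> \<le> 1" using le1 av_nonneg[OF na] by (simp add: power_le_one)
      also have "1 \<le> (E * r) ^ d" using True by simp
      finally show ?thesis .
    qed
    moreover have "av (\<Sum>I\<in>Ind_star N d. a 0 I * mono N I x) \<le> (E * r) ^ d"
      using pert_le[OF na HA E1 le1, of 0] N1 True unfolding r_def by simp
    ultimately have f0: "av (polymap N d a x 0) \<le> (E * r) ^ d"
      using N1 polymap_lt[of 0 N d a x] av_add_le[OF na] by simp
    have u0: "av t * av (polymap N d a x 0) = 1" using ut N1 by simp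
    hence fpos: "0 < av (polymap N d a x 0)" by (metis av_nonneg[OF na] less_le mult_zero_right zero_neq_one)
    have "1 \<le> av t * (E * r) ^ d" using u0 f0 t0 by (metis mult_left_mono)
    hence "1 \<le> (av t * r ^ d) * E ^ d" by (simp add: power_mult_distrib algebra_simps)
    hence "inverse (E ^ d) \<le> av t * r ^ d" using E1
      by (simp add: field_simps)
    hence "inverse (av t * r ^ d) \<le> E ^ d" using E1
      by (metis inverse_inverse_eq le_imp_inverse_le positive_imp_inverse_positive zero_less_power
          less_le_trans zero_less_one)
    thus ?thesis unfolding avN by simp
  next
    case False
    hence Er: "E * r < 1" by simp
    have "k \<noteq> N"
    proof
      assume "k = N" hence "r = 1" using k unfolding r_def by simp
      thus False using Er E1 by simp
    qed
    hence kN: "k < N" using k by simp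
    have pl: "\<And>i. i < N \<Longrightarrow> av (\<Sum>I\<in>Ind_star N d. a i I * mono N I x) < 1"
      using pert_less[OF na HA E1 le1] Er unfolding r_def by simp
    have "av (polymap N d a x k) = 1"
    proof -
      have "av (x k ^ d) = 1" using k na by (simp add: av_power)
      thus ?thesis using av_add_eq[OF na, of "\<Sum>I\<in>Ind_star N d. a k I * mono N I x" "x k ^ d"]
          pl[OF kN] polymap_lt[OF kN, of d a x] by simp
    qed
    hence at1: "av t = 1" using ut[OF kN] by simp
    have unit_x: "\<forall>i<N. av (x i) = 1"
    proof (intro allI impI)
      fix i assume i: "i < N"
      show "av (x i) = 1"
      proof (rule ccontr)
        assume "av (x i) \<noteq> 1"
        hence "av (x i) < 1" using le1 i by (metis le_less less_imp_le_nat)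
        hence "av (x i) ^ d < 1" using av_nonneg[OF na] d1 by (intro pow_less_one) auto
        hence "av (x i ^ d) < 1" using na by (simp add: av_power)
        hence "av (polymap N d a x i) < 1" using av_add_less[OF na] pl[OF i] polymap_lt[OF i, of d a x] by simp
        thus False using ut[OF i] at1 by simp
      qed
    qed
    have "inverse r \<le> R" using SR SsetI[OF x unit_x] unfolding r_def by blast
    hence "inverse r ^ d \<le> R ^ d" using r0 by (intro power_mono) auto
    hence "inverse (av t * r ^ d) \<le> R ^ d" using at1 by (simp add: power_inverse)
    thus ?thesis unfolding avN by simp
  qed
qed


lemma UB:
  assumes cz: "cone Z" and SR: "\<forall>s\<in>Sset N av Z. s \<le> R" and R0: "0 \<le> R"
  shows "\<forall>s\<in>Sset N av (push_set N d a 1 Z). s \<le> max (R ^ d) (E ^ d)"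
proof
  fix s assume "s \<in> Sset N av (push_set N d a 1 Z)"
  then obtain y where y: "y \<in> push_set N d a 1 Z" "\<forall>i<N. av (y i) = 1" and s: "s = inverse (av (y N))"
    unfolding Sset_def by blast
  from y(1) obtain x t where x: "x \<in> Z" "t \<noteq> 0" and yx0: "y = (\<lambda>j. t * (polymap N d a ^^ 1) x j)"
    by (rule push_setE)
  have yx: "y = (\<lambda>j. t * polymap N d a x j)" unfolding yx0 by simp
  define M where "M = Max (av ` x ` {..N})"
  have "M \<in> av ` x ` {..N}" unfolding M_def by (intro Max_in) auto
  then obtain k where k: "k \<le> N" "M = av (x k)" by auto
  have kmax: "\<forall>j\<le>N. av (x j) \<le> av (x k)"
  proof (intro allI impI)
    fix j assume "j \<le> N"
    hence "av (x j) \<le> M" unfolding M_def by (intro Max_ge) auto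
    thus "av (x j) \<le> av (x k)" using k by simp
  qed
  have xk: "x k \<noteq> 0"
  proof
    assume xk0: "x k = 0"
    have x0: "\<forall>j\<le>N. x j = 0"
    proof (intro allI impI)
      fix j assume "j \<le> N"
      hence "av (x j) \<le> 0" using kmax xk0 av_0[OF na] by force
      hence "av (x j) = 0" using av_nonneg[OF na, of "x j"] by linarith
      thus "x j = 0" using av_zero_iff[OF na] by blast
    qed
    have "\<And>I. I \<in> Ind_star N d \<Longrightarrow> mono N I x = 0"
    proof -
      fix I assume "I \<in> Ind_star N d"
      hence "0 < I N" unfolding Ind_star_def by simp
      hence "x N ^ I N = 0" using x0 by simp
      thus "mono N I x = 0" unfolding mono_def by (intro prod_zero) auto
    qed
    hence "polymap N d a x 0 = 0" using N1 d1 x0 polymap_lt[of 0 N d a x] by simp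
    hence "y 0 = 0" unfolding yx by simp
    moreover have "av (y 0) = 1" using y(2) N1 by simp
    ultimately show False using av_0[OF na] by simp
  qed
  define xt where "xt = (\<lambda>j. inverse (x k) * x j)"
  have xtZ: "xt \<in> Z" using cz x xk unfolding cone_def xt_def by simp
  have "av (x k) \<noteq> 0" using xk av_zero_iff[OF na] by blast
  hence avk: "0 < av (x k)" using av_nonneg[OF na, of "x k"] by linarith
  have le1: "\<forall>j\<le>N. av (xt j) \<le> 1"
  proof (intro allI impI)
    fix j assume "j \<le> N"
    hence "av (x j) \<le> av (x k)" using kmax by simp
    moreover have "av (xt j) = av (x j) / av (x k)"
    proof -
      have "av (inverse (x k)) * av (x k) = 1"
        using xk av_mult[OF na, of "inverse (x k)" "x k"] av_one[OF na] by simp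
      hence "av (inverse (x k)) = inverse (av (x k))" using avk by (simp add: field_simps)
      thus ?thesis unfolding xt_def av_mult[OF na] by (simp add: divide_inverse mult.commute)
    qed
    ultimately show "av (xt j) \<le> 1" using avk by simp
  qed
  have "inverse (x k) * x k = 1" using xk by simp
  hence k1: "av (xt k) = 1" unfolding xt_def using av_one[OF na] by simp
  have pxt: "polymap N d a xt = (\<lambda>j. inverse (x k) ^ d * polymap N d a x j)"
    unfolding xt_def by (rule polymap_hom)
  define t' where "t' = t * x k ^ d"
  have yxt: "\<And>j. y j = t' * polymap N d a xt j"
  proof -
    fix j
    have e: "x k ^ d * inverse (x k) ^ d = 1"
      using xk by (metis power_mult_distrib right_inverse power_one)
    have "t' * polymap N d a xt j = t * (x k ^ d * inverse (x k) ^ d) * polymap N d a x j"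
      unfolding pxt t'_def by (simp only: mult.assoc)
    also have "\<dots> = y j" unfolding e yx by simp
    finally show "y j = t' * polymap N d a xt j" by simp
  qed
  have unit: "\<forall>i<N. av (t' * polymap N d a xt i) = 1" using y(2) yxt by simp
  have "inverse (av (t' * polymap N d a xt N)) \<le> max (R ^ d) (E ^ d)"
    by (rule UB_norm[OF xtZ le1 k(1) k1 unit SR R0])
  thus "s \<le> max (R ^ d) (E ^ d)" unfolding s yxt .
qed

lemma LB:
  assumes b: "b \<in> Z" "\<forall>i<N. av (b i) = 1" and Eb: "E * av (b N) < 1"
  shows "polymap N d a b \<in> push_set N d a 1 Z \<and> (\<forall>i<N. av (polymap N d a b i) = 1)
         \<and> av (polymap N d a b N) = av (b N) ^ d"
proof (intro conjI allI impI)
  show "polymap N d a b \<in> push_set N d a 1 Z" by (rule push_setI[OF b(1), of 1]) auto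
  show "av (polymap N d a b N) = av (b N) ^ d" unfolding polymap_N using na by (simp add: av_power)
  fix i assume i: "i < N"
  have "1 * av (b N) \<le> E * av (b N)" using E1 av_nonneg[OF na, of "b N"] by (intro mult_right_mono)
  hence bN: "av (b N) \<le> 1" using Eb by simp
  have le1: "\<forall>j\<le>N. av (b j) \<le> 1"
  proof (intro allI impI)
    fix j assume "j \<le> N"
    thus "av (b j) \<le> 1" using b(2) bN by (cases "j = N") auto
  qed
  have pl: "av (\<Sum>I\<in>Ind_star N d. a i I * mono N I b) < 1"
    using pert_less[OF na HA E1 le1 i Eb] .
  have "av (b i ^ d) = 1" using b(2) i na by (simp add: av_power)
  thus "av (polymap N d a b i) = 1"
    using av_add_eq[OF na, of "\<Sum>I\<in>Ind_star N d. a i I * mono N I b" "b i ^ d"] pl polymap_lt[OF i, of d a b]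
    by simp
qed

end




lemma logplus_nonneg: "0 \<le> logplus x" unfolding logplus_def by auto

lemma logplus_mono: assumes "x \<le> y" shows "logplus x \<le> logplus y"
proof (cases "x \<le> 1")
  case True
  thus ?thesis unfolding logplus_def by simp
next
  case False
  hence "ln x \<le> ln y" using assms by simp
  thus ?thesis using False assms unfolding logplus_def by simp
qed

lemma logplus_ge1: "1 \<le> x \<Longrightarrow> logplus x = ln x"
  unfolding logplus_def by auto

lemma logplus_max1: "logplus x = ln (max 1 x)"
  unfolding logplus_def by (simp add: max_def)

lemma le_exp_logplus: "x \<le> exp (logplus x)"
  unfolding logplus_def by auto

lemma ln_max: "0 < (a::real) \<Longrightarrow> 0 < b \<Longrightarrow> ln (max a b) = max (ln a) (ln b)"
  by (cases "a \<le> b") (simp_all add: max_def ln_le_cancel_iff)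

lemma sup0_facts:
  fixes S :: "real set"
  assumes "\<forall>s\<in>S. s \<le> R" "0 \<le> R"
  shows "bdd_above ({0} \<union> S)" "0 \<le> Sup ({0} \<union> S)" "Sup ({0} \<union> S) \<le> R"
    "\<forall>s\<in>S. s \<le> Sup ({0} \<union> S)"
proof -
  show b: "bdd_above ({0} \<union> S)" using assms by (intro bdd_aboveI[of _ R]) auto
  show "0 \<le> Sup ({0} \<union> S)" using b by (intro cSup_upper) auto
  show "Sup ({0} \<union> S) \<le> R" using assms by (intro cSup_least) auto
  show "\<forall>s\<in>S. s \<le> Sup ({0} \<union> S)" using b by (auto intro: cSup_upper)
qed

context
  fixes av :: "'k::field \<Rightarrow> real"
  assumes na: "nonarch_abs av"
  fixes N d :: nat and a :: "nat \<Rightarrow> (nat \<Rightarrow> nat) \<Rightarrow> 'k" and B :: real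
  assumes HA: "\<forall>i<N. \<forall>I\<in>Ind_star N d. av (a i I) \<le> exp B ^ I N"
    and B0: "0 \<le> B"
    and N1: "1 \<le> N" and d1: "1 \<le> d"
begin

lemma E1: "1 \<le> exp B" using B0 by simp

lemma step:
  assumes cz: "cone Z" and SR: "\<forall>s\<in>Sset N av Z. s \<le> R" and R0: "0 \<le> R"
  shows "\<exists>R'. 0 \<le> R' \<and> (\<forall>s\<in>Sset N av (push_set N d a 1 Z). s \<le> R')"
    "lambda_v N av (push_set N d a 1 Z) \<le> max (real d * lambda_v N av Z) (real d * B)"
    "B < lambda_v N av Z \<Longrightarrow> lambda_v N av (push_set N d a 1 Z) = real d * lambda_v N av Z"
proof -
  define E where "E = exp B"
  have E1': "1 \<le> E" unfolding E_def using E1 .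
  define L where "L = Sup ({0} \<union> Sset N av Z)"
  note sf = sup0_facts[OF SR R0, folded L_def]
  define R1 where "R1 = max 1 L"
  have SR1: "\<forall>s\<in>Sset N av Z. s \<le> R1" using sf(4) unfolding R1_def by force
  define M where "M = max (R1 ^ d) (E ^ d)"
  have "1 \<le> R1 ^ d" unfolding R1_def by (intro one_le_power) simp
  hence M1: "1 \<le> M" unfolding M_def by simp
  have SM: "\<forall>s\<in>Sset N av (push_set N d a 1 Z). s \<le> M"
    unfolding M_def using UB[OF na HA[folded E_def] E1' N1 d1 cz SR1] R1_def by simp
  show "\<exists>R'. 0 \<le> R' \<and> (\<forall>s\<in>Sset N av (push_set N d a 1 Z). s \<le> R')"
    using SM M1 by (intro exI[of _ M]) auto
  define L' where "L' = Sup ({0} \<union> Sset N av (push_set N d a 1 Z))"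
  have M0: "0 \<le> M" using M1 by simp
  note sf' = sup0_facts[OF SM M0, folded L'_def]
  have lam: "lambda_v N av Z = logplus L" unfolding lambda_v_Sset L_def ..
  have lam': "lambda_v N av (push_set N d a 1 Z) = logplus L'" unfolding lambda_v_Sset L'_def ..
  have lnR1: "ln R1 = logplus L" unfolding R1_def logplus_max1 ..
  have R1pos: "0 < R1" unfolding R1_def by simp
  have "logplus L' \<le> logplus M" using sf'(3) by (rule logplus_mono)
  also have "\<dots> = ln M" using M1 by (rule logplus_ge1)
  also have "\<dots> = max (ln (R1 ^ d)) (ln (E ^ d))" unfolding M_def
    using R1pos E1' by (intro ln_max) auto
  also have "\<dots> = max (real d * logplus L) (real d * B)"
    using R1pos E1' unfolding lnR1[symmetric] E_def by (simp add: ln_realpow)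
  finally have upper: "logplus L' \<le> max (real d * logplus L) (real d * B)" .
  thus "lambda_v N av (push_set N d a 1 Z) \<le> max (real d * lambda_v N av Z) (real d * B)"
    unfolding lam lam' .
  assume gt: "B < lambda_v N av Z"
  hence L1: "1 < L" unfolding lam logplus_def using B0 by (auto split: if_splits)
  hence lnL: "logplus L = ln L" unfolding logplus_def by simp
  have "B < ln L" using gt unfolding lam lnL .
  hence LE: "E < L" unfolding E_def using exp_less_mono[OF \<open>B < ln L\<close>] L1 by simp
  have "L ^ d \<le> L'"
  proof (rule ccontr)
    assume "\<not> L ^ d \<le> L'"
    hence lt: "L' < L ^ d" by simp
    define s0 where "s0 = root d L'"
    have s0d: "s0 ^ d = L'" unfolding s0_def using d1 sf'(2) by (simp add: real_root_pow_pos2)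
    have s00: "0 \<le> s0" unfolding s0_def using sf'(2) by (rule real_root_ge_zero)
    have "s0 < L"
    proof (rule ccontr)
      assume "\<not> s0 < L" hence "L \<le> s0" by simp
      hence "L ^ d \<le> s0 ^ d" using L1 by (intro power_mono) auto
      thus False using lt s0d by simp
    qed
    hence "max s0 E < Sup ({0} \<union> Sset N av Z)" using LE unfolding L_def by simp
    then obtain z where z: "z \<in> {0} \<union> Sset N av Z" "max s0 E < z"
      using less_cSup_iff[of "{0} \<union> Sset N av Z" "max s0 E"] sf(1) by blast
    have zE: "E < z" and zs: "s0 < z" using z(2) by auto
    hence "z \<noteq> 0" using E1' by auto
    hence "z \<in> Sset N av Z" using z(1) by simp
    then obtain b where b: "b \<in> Z" "\<forall>i<N. av (b i) = 1" and zb: "z = inverse (av (b N))"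
      unfolding Sset_def by blast
    have zpos: "0 < z" using zE E1' by simp
    have bpos: "0 < av (b N)" using zpos zb by simp
    have "E * av (b N) < 1" using zE zb bpos by (simp add: field_simps)
    note lb = LB[OF na HA[folded E_def] E1' N1 d1 b this]
    have "inverse (av (polymap N d a b N)) \<in> Sset N av (push_set N d a 1 Z)"
      using lb by (intro SsetI) auto
    hence "inverse (av (polymap N d a b N)) \<le> L'" using sf'(4) by blast
    moreover have "inverse (av (polymap N d a b N)) = z ^ d" using lb zb by (simp add: power_inverse)
    moreover have "s0 ^ d < z ^ d" using zs s00 d1 by (intro power_strict_mono) auto
    ultimately show False using s0d by simp
  qed
  moreover have "1 \<le> L ^ d" using L1 by (intro one_le_power) simp
  ultimately have "1 \<le> L'" by simp
  hence "logplus L' = ln L'" by (rule logplus_ge1)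
  moreover have "ln (L ^ d) \<le> ln L'"
  proof -
    have "0 < L ^ d" using L1 by simp
    thus ?thesis using \<open>L ^ d \<le> L'\<close> by (simp only: ln_le_cancel_iff)
  qed
  moreover have "ln (L ^ d) = real d * ln L" using L1 by (simp add: ln_realpow)
  ultimately have "real d * logplus L \<le> logplus L'" using lnL by simp
  moreover have "real d * B < real d * logplus L" using gt d1 unfolding lam by simp
  ultimately show "lambda_v N av (push_set N d a 1 Z) = real d * lambda_v N av Z"
    using upper unfolding lam lam' by linarith
qed

end




lemma base_bound:
  assumes na: "nonarch_abs av" and D: "Div_star_form N e c"
  shows "\<forall>s\<in>Sset N av (zero_set N e c). s \<le> 1 + (\<Sum>I\<in>mindices N e. av (c I))"
proof
  define M where "M = 1 + (\<Sum>I\<in>mindices N e. av (c I))"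
  have cM: "\<And>I. I \<in> mindices N e \<Longrightarrow> av (c I) \<le> M"
  proof -
    fix I assume "I \<in> mindices N e"
    hence "av (c I) \<le> (\<Sum>I\<in>mindices N e. av (c I))"
      using finite_mindices av_nonneg[OF na] by (intro member_le_sum) auto
    thus "av (c I) \<le> M" unfolding M_def by simp
  qed
  have M1: "1 \<le> M" unfolding M_def using av_nonneg[OF na] by (simp add: sum_nonneg)
  fix s assume "s \<in> Sset N av (zero_set N e c)"
  then obtain b where b: "b \<in> zero_set N e c" "\<forall>i<N. av (b i) = 1" and sb: "s = inverse (av (b N))"
    unfolding Sset_def by blast
  define r where "r = av (b N)"
  have r0: "0 \<le> r" unfolding r_def using av_nonneg[OF na] .
  show "s \<le> 1 + (\<Sum>I\<in>mindices N e. av (c I))"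
  proof (rule ccontr)
    assume "\<not> s \<le> 1 + (\<Sum>I\<in>mindices N e. av (c I))"
    hence sM: "M < s" unfolding M_def by simp
    hence "0 < inverse r" using sb M1 unfolding r_def by linarith
    hence rpos: "0 < r" by simp
    have Mr: "M * r < 1" using sM sb rpos M1 unfolding r_def by (simp add: field_simps)
    moreover have "1 * r \<le> M * r" using M1 rpos by (intro mult_right_mono) auto
    ultimately have r1: "r < 1" by simp
    from D obtain E where E: "\<forall>j\<ge>N. E j = 0" "sum E {..<N} = e"
      and cE: "\<forall>I. I N = 0 \<longrightarrow> c I = (if I = E then 1 else 0)"
      unfolding Div_star_form_def by blast
    have Emi: "E \<in> mindices N e"
      unfolding mindices_def using E by (simp add: lessThan_Suc_atMost[symmetric])
    have ev: "eval_form N e c b = 0" using b(1) unfolding zero_set_def by simp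
    have split: "eval_form N e c b = c E * mono N E b + (\<Sum>I\<in>mindices N e - {E}. c I * mono N I b)"
      unfolding eval_form_def using Emi finite_mindices by (simp add: sum.remove)
    have mE: "av (mono N E b) = 1" using av_mono_eq[OF na b(2)] E(1) by simp
    have cE1: "c E = 1" using cE E(1) by simp
    have rest: "av (\<Sum>I\<in>mindices N e - {E}. c I * mono N I b) < 1"
    proof (rule av_sum_less[OF na])
      fix I assume I: "I \<in> mindices N e - {E}"
      show "av (c I * mono N I b) < 1"
      proof (cases "I N = 0")
        case True
        hence "c I = 0" using cE I by auto
        thus ?thesis using av_0[OF na] by simp
      next
        case False
        have "av (c I * mono N I b) = av (c I) * r ^ I N"
          using av_mono_eq[OF na b(2)] av_mult[OF na] unfolding r_def by simp
        also have "\<dots> \<le> M * r"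
        proof (rule mult_mono)
          show "av (c I) \<le> M" using cM I by simp
          show "r ^ I N \<le> r" using False r0 r1 power_decreasing[of 1 "I N" r] by simp
        qed (use M1 r0 in auto)
        finally show ?thesis using Mr by simp
      qed
    qed simp
    have "av (eval_form N e c b) = 1"
      unfolding split cE1 using av_add_eq[OF na, of "\<Sum>I\<in>mindices N e - {E}. c I * mono N I b" "mono N E b"] mE rest by simp
    thus False using ev av_0[OF na] by simp
  qed
qed

lemma HA_from_B:
  assumes na: "nonarch_abs av"
  shows "\<forall>i<N. \<forall>I\<in>Ind_star N d. av (a i I) \<le> exp (B_v N d av a) ^ I N"
proof (intro allI impI ballI)
  fix i I assume i: "i < N" and I: "I \<in> Ind_star N d"
  define S where "S = {av (a i I) powr (1 / real (I N)) | i I. i < N \<and> I \<in> Ind_star N d}"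
  have "S = (\<lambda>(i, I). av (a i I) powr (1 / real (I N))) ` ({..<N} \<times> Ind_star N d)"
    unfolding S_def by auto
  hence fS: "finite S" using finite_Ind_star by simp
  define v where "v = av (a i I) powr (1 / real (I N))"
  have "v \<in> S" unfolding S_def v_def using i I by blast
  hence "v \<le> Max S" using fS by (intro Max_ge)
  also have "\<dots> \<le> exp (logplus (Max S))" by (rule le_exp_logplus)
  finally have vE: "v \<le> exp (B_v N d av a)" unfolding B_v_def S_def .
  have n0: "0 < I N" using I unfolding Ind_star_def by simp
  show "av (a i I) \<le> exp (B_v N d av a) ^ I N"
  proof (cases "av (a i I) = 0")
    case True thus ?thesis by simp
  next
    case False
    hence pos: "0 < av (a i I)" using av_nonneg[OF na, of "a i I"] by simp
    have "v ^ I N = v powr real (I N)" using pos unfolding v_def by (simp add: powr_realpow)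
    also have "\<dots> = av (a i I)" unfolding v_def powr_powr using n0 pos by simp
    finally have "av (a i I) = v ^ I N" ..
    also have "\<dots> \<le> exp (B_v N d av a) ^ I N" using vE unfolding v_def by (intro power_mono) auto
    finally show ?thesis .
  qed
qed




lemma seq_grow:
  fixes l :: "nat \<Rightarrow> real"
  assumes d1: "1 \<le> d" and pos: "\<forall>n. 0 \<le> l n"
    and ex: "\<forall>n. B < l n \<longrightarrow> l (Suc n) = real d * l n" and m: "B < l m"
  shows "l (m + k) = real d ^ k * l m \<and> B < l (m + k)"
proof (induction k)
  case (Suc k)
  hence "l (m + Suc k) = real d * l (m + k)" using ex by simp
  hence e: "l (m + Suc k) = real d ^ Suc k * l m" using Suc by simp
  have "1 * l (m + k) \<le> real d * l (m + k)" using d1 pos by (intro mult_right_mono) auto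
  hence "l (m + k) \<le> real d * l (m + k)" by simp
  hence "B < l (m + Suc k)" using Suc \<open>l (m + Suc k) = real d * l (m + k)\<close> by simp
  thus ?case using e by simp
qed (use m in simp)

lemma seq_main:
  fixes l :: "nat \<Rightarrow> real" and B :: real and d :: nat
  assumes d2: "2 \<le> d" and B0: "0 \<le> B" and pos: "\<forall>n. 0 \<le> l n"
    and up: "\<forall>n. l (Suc n) \<le> max (real d * l n) (real d * B)"
    and ex: "\<forall>n. B < l n \<longrightarrow> l (Suc n) = real d * l n"
  defines "g \<equiv> (\<lambda>n. l n / real d ^ n)"
  shows "convergent g" "B < l 0 \<Longrightarrow> lim g = l 0" "\<bar>lim g - l 0\<bar> \<le> 2 * B"
    "finite (range l) \<Longrightarrow> lim g = 0"
proof -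
  have d1: "1 \<le> d" using d2 by simp
  have dpos: "0 < real d" using d2 by simp
  have lim_m: "g \<longlonglongrightarrow> l m / real d ^ m" if m: "B < l m" for m
  proof -
    have "\<And>k. g (k + m) = l m / real d ^ m"
    proof -
      fix k
      have "l (m + k) = real d ^ k * l m" using seq_grow[OF d1 pos ex m] by simp
      thus "g (k + m) = l m / real d ^ m" unfolding g_def using dpos
        by (simp add: add.commute power_add field_simps)
    qed
    hence "(\<lambda>k. g (k + m)) \<longlonglongrightarrow> l m / real d ^ m" by simp
    thus ?thesis by (rule LIMSEQ_offset)
  qed
  have lim0: "g \<longlonglongrightarrow> 0" if none: "\<forall>n. l n \<le> B"
  proof (rule tendsto_sandwich[of "\<lambda>n. 0" _ _ "\<lambda>n. B * (1 / real d) ^ n"])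
    show "\<forall>\<^sub>F n in sequentially. 0 \<le> g n" unfolding g_def using pos by simp
    show "\<forall>\<^sub>F n in sequentially. g n \<le> B * (1 / real d) ^ n"
      unfolding g_def using none dpos by (simp add: power_divide divide_right_mono)
    have "(\<lambda>n. (1 / real d) ^ n) \<longlonglongrightarrow> 0" using d2 by (intro LIMSEQ_power_zero) simp
    thus "(\<lambda>n. B * (1 / real d) ^ n) \<longlonglongrightarrow> 0" by (rule tendsto_mult_right_zero)
  qed simp
  show "convergent g"
  proof (cases "\<exists>m. B < l m")
    case True then obtain m where "B < l m" by blast
    thus ?thesis using lim_m unfolding convergent_def by blast
  next
    case False thus ?thesis using lim0 unfolding convergent_def by (meson not_le)
  qed
  show "B < l 0 \<Longrightarrow> lim g = l 0" using lim_m[of 0] by (simp add: limI)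
  show "\<bar>lim g - l 0\<bar> \<le> 2 * B"
  proof (cases "B < l 0")
    case True thus ?thesis using lim_m[of 0] B0 by (simp add: limI)
  next
    case False
    show ?thesis
    proof (cases "\<exists>m. B < l m")
      case True
      define m where "m = (LEAST m. B < l m)"
      have lm: "B < l m" unfolding m_def using True by (metis LeastI)
      have "m \<noteq> 0" using lm False by (cases m) auto
      then obtain p where p: "m = Suc p" by (cases m) auto
      have "\<not> B < l p" using p m_def not_less_Least[of p "\<lambda>m. B < l m"] by simp
      hence "real d * l p \<le> real d * B" using dpos by (intro mult_left_mono) auto
      hence lmB: "l m \<le> real d * B" using up[rule_format, of p] p by simp
      have "real d ^ 1 \<le> real d ^ m" using p d1 by (intro power_increasing) auto
      hence "real d * B \<le> real d ^ m * B" using B0 by (intro mult_right_mono) auto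
      hence "l m \<le> B * real d ^ m" using lmB by (simp add: mult.commute)
      hence "l m / real d ^ m \<le> B" using dpos by (simp add: pos_divide_le_eq)
      moreover have "0 \<le> l m / real d ^ m" using pos dpos by simp
      moreover have "lim g = l m / real d ^ m" using lim_m[OF lm] by (simp add: limI)
      ultimately show ?thesis using False pos[rule_format, of 0] B0 by simp
    next
      case False
      hence "lim g = 0" using lim0 by (simp add: limI not_less)
      have "l 0 \<le> B" using False by (simp add: not_less)
      thus ?thesis using \<open>lim g = 0\<close> pos[rule_format, of 0] B0 by simp
    qed
  qed
  assume fin: "finite (range l)"
  have "\<forall>n. l n \<le> B"
  proof (rule ccontr)
    assume "\<not> (\<forall>n. l n \<le> B)"
    then obtain m where m: "B < l m" by (auto simp: not_le)
    hence lmpos: "0 < l m" using B0 by simp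
    obtain k where k: "Max (range l) / l m < real d ^ k"
      using real_arch_pow[of "real d" "Max (range l) / l m"] d2 by auto
    have "Max (range l) < real d ^ k * l m" using k lmpos by (simp add: field_simps)
    also have "\<dots> = l (m + k)" using seq_grow[OF d1 pos ex m] by simp
    also have "\<dots> \<le> Max (range l)" using fin by (intro Max_ge) auto
    finally show False by simp
  qed
  thus "lim g = 0" using lim0 by (simp add: limI)
qed




lemma per_divisor:
  fixes av :: "'k::field \<Rightarrow> real" and a :: "nat \<Rightarrow> (nat \<Rightarrow> nat) \<Rightarrow> 'k"
  assumes na: "nonarch_abs av" and N1: "1 \<le> N" and d2: "2 \<le> d" and D: "Div_star_form N e c"
  shows "convergent (G_seq N d av a (zero_set N e c))"
    "G_v N d av a (push_set N d a 1 (zero_set N e c)) = real d * G_v N d av a (zero_set N e c)"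
    "preperiodic N d a (zero_set N e c) \<Longrightarrow> G_v N d av a (zero_set N e c) = 0"
    "lambda_v N av (zero_set N e c) > B_v N d av a \<Longrightarrow>
        G_v N d av a (zero_set N e c) = lambda_v N av (zero_set N e c)"
    "\<bar>G_v N d av a (zero_set N e c) - lambda_v N av (zero_set N e c)\<bar> \<le> 2 * B_v N d av a"
proof -
  define Z0 where "Z0 = zero_set N e c"
  define B where "B = B_v N d av a"
  define l where "l = (\<lambda>n. lambda_v N av (push_set N d a n Z0))"
  have d1: "1 \<le> d" using d2 by simp
  have HA: "\<forall>i<N. \<forall>I\<in>Ind_star N d. av (a i I) \<le> exp B ^ I N"
    unfolding B_def by (rule HA_from_B[OF na])
  have B0: "0 \<le> B" unfolding B_def B_v_def by (rule logplus_nonneg)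
  have cZ0: "cone Z0" unfolding Z0_def by (rule cone_zero_set)
  have Z00: "push_set N d a 0 Z0 = Z0" using push0[OF cZ0] .
  have Zsuc: "\<And>n. push_set N d a (Suc n) Z0 = push_set N d a 1 (push_set N d a n Z0)"
    using push_push[of N d a 1] by simp
  have bnd: "\<exists>R. 0 \<le> R \<and> (\<forall>s\<in>Sset N av (push_set N d a n Z0). s \<le> R)" for n
  proof (induction n)
    case 0
    have "0 \<le> 1 + (\<Sum>I\<in>mindices N e. av (c I))" using av_nonneg[OF na] by (simp add: sum_nonneg add_nonneg_nonneg)
    thus ?case unfolding Z00 using base_bound[OF na D] unfolding Z0_def by blast
  next
    case (Suc n)
    then obtain R where R: "0 \<le> R" "\<forall>s\<in>Sset N av (push_set N d a n Z0). s \<le> R" by blast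
    show ?case unfolding Zsuc using step(1)[OF na HA B0 N1 d1 cone_push R(2) R(1)] .
  qed
  have up: "\<forall>n. l (Suc n) \<le> max (real d * l n) (real d * B)"
  proof
    fix n
    obtain R where R: "0 \<le> R" "\<forall>s\<in>Sset N av (push_set N d a n Z0). s \<le> R" using bnd by blast
    show "l (Suc n) \<le> max (real d * l n) (real d * B)"
      unfolding l_def Zsuc using step(2)[OF na HA B0 N1 d1 cone_push R(2) R(1)] .
  qed
  have ex: "\<forall>n. B < l n \<longrightarrow> l (Suc n) = real d * l n"
  proof (intro allI impI)
    fix n assume "B < l n"
    obtain R where R: "0 \<le> R" "\<forall>s\<in>Sset N av (push_set N d a n Z0). s \<le> R" using bnd by blast
    show "l (Suc n) = real d * l n"
      using \<open>B < l n\<close> unfolding l_def Zsuc using step(3)[OF na HA B0 N1 d1 cone_push R(2) R(1)] by simp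
  qed
  have pos: "\<forall>n. 0 \<le> l n" unfolding l_def lambda_v_def by (simp add: logplus_nonneg)
  note sm = seq_main[OF d2 B0 pos up ex]
  have Gs: "G_seq N d av a Z0 = (\<lambda>n. l n / real d ^ n)"
    unfolding G_seq_def l_def ..
  have GZ: "G_v N d av a Z0 = lim (\<lambda>n. l n / real d ^ n)" unfolding G_v_def Gs ..
  have l0: "l 0 = lambda_v N av Z0" unfolding l_def Z00 ..
  show "convergent (G_seq N d av a (zero_set N e c))" using sm(1) Gs Z0_def by simp
  show "lambda_v N av (zero_set N e c) > B_v N d av a \<Longrightarrow>
        G_v N d av a (zero_set N e c) = lambda_v N av (zero_set N e c)"
    using sm(2) GZ l0 unfolding Z0_def B_def by simp
  show "\<bar>G_v N d av a (zero_set N e c) - lambda_v N av (zero_set N e c)\<bar> \<le> 2 * B_v N d av a"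
    using sm(3) GZ l0 unfolding Z0_def B_def by simp
  show "preperiodic N d a (zero_set N e c) \<Longrightarrow> G_v N d av a (zero_set N e c) = 0"
  proof -
    assume "preperiodic N d a (zero_set N e c)"
    hence "finite (range (\<lambda>n. push_set N d a n Z0))" unfolding preperiodic_def Z0_def .
    hence "finite (lambda_v N av ` range (\<lambda>n. push_set N d a n Z0))" by simp
    moreover have "range l = lambda_v N av ` range (\<lambda>n. push_set N d a n Z0)" unfolding l_def by auto
    ultimately have "finite (range l)" by simp
    thus ?thesis using sm(4) GZ unfolding Z0_def by simp
  qed
  have conv: "(\<lambda>n. l n / real d ^ n) \<longlonglongrightarrow> lim (\<lambda>n. l n / real d ^ n)"
    using sm(1) by (simp add: convergent_LIMSEQ_iff)
  hence "(\<lambda>n. l (Suc n) / real d ^ Suc n) \<longlonglongrightarrow> lim (\<lambda>n. l n / real d ^ n)"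
    by (rule LIMSEQ_Suc[of "\<lambda>n. l n / real d ^ n"])
  hence "(\<lambda>n. real d * (l (Suc n) / real d ^ Suc n)) \<longlonglongrightarrow> real d * lim (\<lambda>n. l n / real d ^ n)"
    by (intro tendsto_mult_left)
  moreover have "\<And>n. real d * (l (Suc n) / real d ^ Suc n) = l (Suc n) / real d ^ n"
    using d1 by (simp add: field_simps)
  ultimately have lim1: "(\<lambda>n. l (Suc n) / real d ^ n) \<longlonglongrightarrow> real d * G_v N d av a Z0"
    unfolding GZ by simp
  have "G_seq N d av a (push_set N d a 1 Z0) = (\<lambda>n. l (Suc n) / real d ^ n)"
  proof
    fix n
    have "push_set N d a n (push_set N d a 1 Z0) = push_set N d a (Suc n) Z0"
      using push_push[of N d a n 1 Z0] by simp
    thus "G_seq N d av a (push_set N d a 1 Z0) n = l (Suc n) / real d ^ n"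
      unfolding G_seq_def l_def by simp
  qed
  thus "G_v N d av a (push_set N d a 1 (zero_set N e c)) = real d * G_v N d av a (zero_set N e c)"
    using lim1 unfolding G_v_def Z0_def by (simp add: limI)
qed

theorem lemma3p3:
  fixes av :: "'k::field \<Rightarrow> real"
    and N d :: nat
    and a :: "nat \<Rightarrow> (nat \<Rightarrow> nat) \<Rightarrow> 'k"
  assumes "N \<ge> 1" and "d \<ge> 2"
    and "alg_closed TYPE('k)"
    and "nonarch_abs av" and "nontrivial_abs av" and "complete_abs av"
    and "CHAR('k) = 0 \<or> CHAR('k) > d"
  shows
    "(\<forall>e c. Div_star_form N e c \<longrightarrow> convergent (G_seq N d av a (zero_set N e c))) \<and>
     (\<forall>e c. Div_star_form N e c \<longrightarrow>
        G_v N d av a (push_set N d a 1 (zero_set N e c)) = real d * G_v N d av a (zero_set N e c)) \<and>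
     (\<forall>e c. Div_star_form N e c \<longrightarrow> preperiodic N d a (zero_set N e c) \<longrightarrow>
        G_v N d av a (zero_set N e c) = 0) \<and>
     (\<forall>e c. Div_star_form N e c \<longrightarrow> lambda_v N av (zero_set N e c) > B_v N d av a \<longrightarrow>
        G_v N d av a (zero_set N e c) = lambda_v N av (zero_set N e c)) \<and>
     (\<forall>e c. Div_star_form N e c \<longrightarrow>
        \<bar>G_v N d av a (zero_set N e c) - lambda_v N av (zero_set N e c)\<bar> \<le> 2 * B_v N d av a)"
  using per_divisor[OF assms(4) assms(1) assms(2)] by blast



end
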